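(* If $\mathcal F=\{f_1,\dots,f_M\}$ is a frame for $\mathbb C^N$ and $\mathbb M^{\mathcal F}$ is injective, then $M\ge 2N$.
   Context: A frame for $\mathbb C^N$ is a spanning family $\{f_1,\dots,f_M\}$, $\langle x,y\rangle=\sum_k x_k\overline{y_k}$. $\mathbb M^{\mathcal F}$ is injective means $|\langle x,f_k\rangle|=|\langle y,f_k\rangle|$ for all $k$ implies $y=cx$ for some $c\in\mathbb C$ with $|c|=1$. *)

theory Defs
  imports "HOL-Analysis.Analysis"
begin

text \<open>Vectors of C^N are modelled as complex ^ 'n with N = CARD('n).
  Complex scalar multiplication is the componentwise (*s).\<close>

definition cinner :: "complex ^ 'n \<Rightarrow> complex ^ 'n \<Rightarrow> complex" where
  "cinner x y = (\<Sum>i\<in>UNIV. x $ i * cnj (y $ i))"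

definition is_frame :: "(nat \<Rightarrow> complex ^ 'n) \<Rightarrow> nat \<Rightarrow> bool" where
  "is_frame f M \<longleftrightarrow> module.span (*s) (f ` {..<M}) = UNIV"

definition phaseless_injective :: "(nat \<Rightarrow> complex ^ 'n) \<Rightarrow> nat \<Rightarrow> bool" where
  "phaseless_injective f M \<longleftrightarrow>
     (\<forall>x y. (\<forall>k<M. cmod (cinner x (f k)) = cmod (cinner y (f k))) \<longrightarrow>
            (\<exists>c. cmod c = 1 \<and> y = c *s x))"

end

theory Submission
  imports Defs
begin

lemma Re_cinner: "Re (cinner x y) = x \<bullet> y"
  unfolding cinner_def inner_vec_def by (simp add: Re_sum inner_complex_def)

lemma cinner_add_left: "cinner (x + y) z = cinner x z + cinner y z"
  unfolding cinner_def by (simp add: distrib_right sum.distrib)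

lemma cinner_diff_left: "cinner (x - y) z = cinner x z - cinner y z"
  unfolding cinner_def by (simp add: left_diff_distrib sum_subtractf)

lemma cinner_scale_left: "cinner (c *s x) z = c * cinner x z"
  unfolding cinner_def by (simp add: sum_distrib_left mult.assoc)

lemma cinner_scale_right: "cinner x (c *s z) = cnj c * cinner x z"
  unfolding cinner_def by (simp add: sum_distrib_left mult_ac)

lemma cinner_add_right: "cinner x (y + z) = cinner x y + cinner x z"
  unfolding cinner_def by (simp add: distrib_left sum.distrib)

lemma cinner_zero_right: "cinner x 0 = 0"
  unfolding cinner_def by simp

lemma cinner_self_eq_0: "cinner x x = 0 \<Longrightarrow> x = 0"
  using Re_cinner[of x x] by simp

lemma frame_nonzero:
  assumes "is_frame f M" "u \<noteq> 0"
  shows "\<exists>k<M. cinner u (f k) \<noteq> 0"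
proof (rule ccontr)
  assume "\<not> ?thesis"
  hence H: "f ` {..<M} \<subseteq> {y. cinner u y = 0}" by auto
  have "vec.subspace {y. cinner u y = 0}"
    unfolding vec.subspace_def
    by (simp add: cinner_zero_right cinner_add_right cinner_scale_right)
  hence "vec.span (f ` {..<M}) \<subseteq> {y. cinner u y = 0}"
    using H by (rule vec.span_minimal[rotated])
  hence "cinner u u = 0" using assms(1) unfolding is_frame_def by auto
  thus False using assms(2) cinner_self_eq_0 by blast
qed


lemma cmod_pm: "Re (cnj a * b) = 0 \<Longrightarrow> cmod (a + b) = cmod (a - b)"
  unfolding cmod_def by (simp add: algebra_simps power2_eq_square)

theorem proposition3p6:
  fixes f :: "nat \<Rightarrow> complex ^ 'n" and M :: nat
  assumes "CARD('n) \<ge> 2"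
    and "is_frame f M"
    and "phaseless_injective f M"
  shows "M \<ge> 2 * CARD('n)"
proof (rule ccontr)
  assume "\<not> ?thesis"
  hence Mlt: "M < 2 * CARD('n)" by simp
  have "dim {f 0, \<i> *s f 0} \<le> card {f 0, \<i> *s f 0}" by (rule dim_le_card') auto
  also have "\<dots> \<le> 2" by (simp add: card_insert_le_m1)
  also have "2 < DIM(complex ^ 'n)" using assms(1) by simp
  finally obtain u :: "complex ^ 'n" where u0: "u \<noteq> 0"
    and uo: "\<And>y. y \<in> span {f 0, \<i> *s f 0} \<Longrightarrow> orthogonal u y"
    using orthogonal_to_subspace_exists by blast
  have o1: "u \<bullet> f 0 = 0" using uo[of "f 0"] by (simp add: span_base orthogonal_def)
  have o2: "u \<bullet> (\<i> *s f 0) = 0" using uo[of "\<i> *s f 0"] by (simp add: span_base orthogonal_def)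
  define a where "a k = cinner u (f k)" for k
  have a0: "a 0 = 0"
  proof (rule complex_eqI)
    show "Re (a 0) = Re 0" using o1 Re_cinner[of u "f 0"] by (simp add: a_def)
    have "Re (cinner u (\<i> *s f 0)) = Im (a 0)"
      by (simp add: cinner_scale_right a_def)
    thus "Im (a 0) = Im 0" using o2 Re_cinner[of u "\<i> *s f 0"] by simp
  qed
  define w where "w k = a k *s f k" for k
  have wv: "w k \<bullet> v = Re (cnj (a k) * cinner v (f k))" for k v
    using Re_cinner[of v "w k"] by (simp add: w_def cinner_scale_right inner_commute)
  define W where "W = span (w ` {1..<M})"
  define K where "K = {y. \<forall>x\<in>W. orthogonal x y}"
  have "dim W \<le> card (w ` {1..<M})" unfolding W_def dim_span by (rule dim_le_card') auto
  also have "\<dots> \<le> card {1..<M}" by (rule card_image_le) simp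
  finally have dW: "dim W \<le> M - 1" by simp
  have "dim {y \<in> UNIV. \<forall>x \<in> W. orthogonal x y} + dim W = dim (UNIV :: (complex ^ 'n) set)"
    by (rule dim_subspace_orthogonal_to_vectors) (auto simp: W_def)
  hence "dim K + dim W = 2 * CARD('n)" by (simp add: K_def)
  hence dK: "dim K \<ge> 2" using dW Mlt by arith
  have "\<not> K \<subseteq> span {\<i> *s u}"
  proof
    assume "K \<subseteq> span {\<i> *s u}"
    hence "dim K \<le> dim (span {\<i> *s u})" by (rule dim_subset)
    also have "\<dots> \<le> card {\<i> *s u}" unfolding dim_span by (rule dim_le_card') auto
    finally show False using dK by simp
  qed
  then obtain v where vK: "v \<in> K" and vn: "v \<notin> span {\<i> *s u}" by blast
  have vo: "Re (cnj (a k) * cinner v (f k)) = 0" if "k \<in> {1..<M}" for k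
  proof -
    have "w k \<in> W" unfolding W_def using that by (simp add: span_base)
    thus ?thesis using vK wv[of k v] by (simp add: K_def orthogonal_def)
  qed
  have vo': "Re (cnj (a k) * cinner v (f k)) = 0" if "k < M" for k
    using vo[of k] that a0 by (cases "k = 0") auto
  have "\<forall>k<M. cmod (cinner (u + v) (f k)) = cmod (cinner (u - v) (f k))"
    using vo' by (simp add: cinner_add_left cinner_diff_left cmod_pm flip: a_def)
  then obtain c where c1: "cmod c = 1" and ceq: "u - v = c *s (u + v)"
    using assms(3) unfolding phaseless_injective_def by blast
  show False
  proof (cases "c = -1")
    case True
    hence "u = 0" using ceq by (auto simp: vec_eq_iff)
    thus False using u0 by simp
  next
    case False
    hence c1': "1 + c \<noteq> 0" by (metis add.commute add_eq_0_iff)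
    define d where "d = (1 - c) / (1 + c)"
    have vd: "v = d *s u"
    proof -
      have "v $ i = d * u $ i" for i
      proof -
        have "u $ i - v $ i = c * (u $ i + v $ i)" using ceq by (simp add: vec_eq_iff algebra_simps)
        hence "(1 + c) * v $ i = (1 - c) * u $ i" by (simp add: algebra_simps)
        thus ?thesis using c1' unfolding d_def by (simp add: field_simps)
      qed
      thus ?thesis by (simp add: vec_eq_iff)
    qed
    obtain k where k: "k < M" "a k \<noteq> 0" using frame_nonzero[OF assms(2) u0] a_def by auto
    have "Re (cnj (a k) * (d * a k)) = 0"
      using vo'[OF k(1)] by (simp add: vd cinner_scale_left a_def)
    hence "Re d * (cmod (a k))^2 = 0"
      by (simp add: cmod_def algebra_simps power2_eq_square)
    hence Rd: "Re d = 0" using k(2) by simp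
    have "v = Im d *\<^sub>R (\<i> *s u)"
    proof -
      have "d = complex_of_real (Im d) * \<i>" using Rd by (simp add: complex_eq_iff)
      hence "\<And>i. d * u $ i = Im d *\<^sub>R (\<i> * u $ i)"
        by (simp add: scaleR_conv_of_real mult_ac)
      thus ?thesis unfolding vd by (simp add: vec_eq_iff)
    qed
    hence "v \<in> span {\<i> *s u}" by (simp add: span_base span_scale)
    thus False using vn by simp
  qed
qed

end
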